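(* Let $\mathbb{G}$ and $\mathbb{H}$ be finite loopless graphs that are not 3-colorable, let $e=\{g,g'\}$ be a critical edge of $\mathbb{G}$ and $f=\{h,h'\}$ a critical edge of $\mathbb{H}$. Let $\mathbb{N}$ be a finite loopless graph with four distinct vertices $x,x',y,y'$ such that $\{x,x'\}$ and $\{y,y'\}$ are non-edges, and with an edge $d$, such that: (N1) every homomorphism $c:\mathbb{N}\to\mathbb{K}_3$ satisfies exactly one of $c(x)\neq c(x')$ and $c(y)\neq c(y')$; (N2) every map $c:\{x,x',y,y'\}\to\mathbb{K}_3$ satisfying exactly one of $c(x)\neq c(x')$, $c(y)\ne c(y')$ extends to a homomorphism $\mathbb{N}\to\mathbb{K}_3$; (N3) every map $c:\{x,x',y,y'\}\to\mathbb{K}_3$ with $c(x)=c(x')$ and $c(y)=c(y')$ extends to a homomorphism $\mathbb{N}-d\to\mathbb{K}_3$. Let $\mathbb{W}=(\mathbb{G},e)\oplus(\mathbb{H},f)$ be the graph obtained from the disjoint union of $\mathbb{G}-e$, $\mathbb{H}-f$ and $\mathbb{N}$ by identifying $g$ with $x$, $g'$ with $x'$, $h$ with $y$, and $h'$ with $y'$. Then: (1) $\mathbb{W}$ is not 3-colorable; (2) $d$ is a critical edge of $\mathbb{W}$; (3) $\Sigma_{\mathbb{W}}$ is implied by $\Sigma_{\mathbb{G}}$ and is implied by $\Sigma_{\mathbb{H}}$.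
   Context: A graph is a structure $(V,E)$ with a single symmetric binary relation $E$; $\mathbb{K}_3$ is the complete loopless graph on three vertices and a graph is 3-colorable if it admits a homomorphism to $\mathbb{K}_3$. For an edge $e$ of $\mathbb{M}$, $\mathbb{M}-e$ is the graph obtained by removing $e$; an edge $e$ of $\mathbb{M}$ is critical if $\mathbb{M}-e$ is 3-colorable. A clone on a set is a set of finitary operations containing all projections and closed under composition. A height 1 condition is a finite set of identities $f(x_{\pi(1)},\dots,x_{\pi(n)})\approx g(x_{\rho(1)},\dots,x_{\rho(m)})$ (function symbols, arbitrary maps $\pi,\rho$, universally quantified); a clone satisfies it if its symbols can be assigned functions of the clone of the right arities making all identities true; $\Sigma$ implies $\Sigma'$ if every clone satisfying $\Sigma$ satisfies $\Sigma'$. For a finite graph $\mathbb{G}=(V,E)$, $\Sigma_{\mathbb{G}}$ is the height 1 condition with a ternary symbol $f_v$ for each $v\in V$, a $6$-ary symbol $g_{(u,v)}$ for each $(u,v)\in E$, and, for each $(u,v)\in E$, the identities $f_u(x,y,z)\approx g_{(u,v)}(x,y,x,z,y,z)$ and $f_v(x,y,z)\approx g_{(u,v)}(y,x,z,x,z,y)$. *)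

theory Defs
  imports Main
begin

text \<open>A graph is given by a vertex set V and a symmetric edge relation E (a set of
ordered pairs, containing both orientations of every edge).\<close>

definition finite_loopless_graph :: "'a set \<Rightarrow> ('a \<times> 'a) set \<Rightarrow> bool" where
  "finite_loopless_graph V E \<longleftrightarrow> finite V \<and> E \<subseteq> V \<times> V \<and> sym E \<and> (\<forall>v. (v, v) \<notin> E)"

definition graph_hom :: "('a \<times> 'a) set \<Rightarrow> 'b set \<Rightarrow> ('b \<times> 'b) set \<Rightarrow> ('a \<Rightarrow> 'b) \<Rightarrow> 'a set \<Rightarrow> bool" where
  "graph_hom E V' E' c V \<longleftrightarrow> (\<forall>v\<in>V. c v \<in> V') \<and> (\<forall>(u, v)\<in>E. (c u, c v) \<in> E')"

definition K3_V :: "nat set" where "K3_V = {0, 1, 2}"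
definition K3_E :: "(nat \<times> nat) set" where "K3_E = {(i, j). i \<in> K3_V \<and> j \<in> K3_V \<and> i \<noteq> j}"

definition hom_K3 :: "'a set \<Rightarrow> ('a \<times> 'a) set \<Rightarrow> ('a \<Rightarrow> nat) \<Rightarrow> bool" where
  "hom_K3 V E c \<longleftrightarrow> graph_hom E K3_V K3_E c V"

definition three_colorable :: "'a set \<Rightarrow> ('a \<times> 'a) set \<Rightarrow> bool" where
  "three_colorable V E \<longleftrightarrow> (\<exists>c. hom_K3 V E c)"

definition remove_edge :: "('a \<times> 'a) set \<Rightarrow> 'a \<Rightarrow> 'a \<Rightarrow> ('a \<times> 'a) set" where
  "remove_edge E u v = E - {(u, v), (v, u)}"

definition critical_edge :: "'a set \<Rightarrow> ('a \<times> 'a) set \<Rightarrow> 'a \<Rightarrow> 'a \<Rightarrow> bool" where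
  "critical_edge V E u v \<longleftrightarrow> (u, v) \<in> E \<and> three_colorable V (remove_edge E u v)"

text \<open>A finitary operation on A is represented by its arity n and a function on lists,
only its values on lists over A of length n being relevant.\<close>

type_synonym 'c operation = "nat \<times> ('c list \<Rightarrow> 'c)"

definition tuples :: "'c set \<Rightarrow> nat \<Rightarrow> 'c list set" where
  "tuples A n = {xs. set xs \<subseteq> A \<and> length xs = n}"

definition is_op :: "'c set \<Rightarrow> nat \<Rightarrow> ('c list \<Rightarrow> 'c) \<Rightarrow> bool" where
  "is_op A n f \<longleftrightarrow> (\<forall>xs\<in>tuples A n. f xs \<in> A)"

definition clone :: "'c set \<Rightarrow> 'c operation set \<Rightarrow> bool" where
  "clone A C \<longleftrightarrow>
     (\<forall>(n, f)\<in>C. is_op A n f) \<and>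
     (\<forall>n i. i < n \<longrightarrow> (\<exists>p. (n, p) \<in> C \<and> (\<forall>xs\<in>tuples A n. p xs = xs ! i))) \<and>
     (\<forall>n f m gs. (n, f) \<in> C \<longrightarrow> length gs = n \<longrightarrow> (\<forall>g\<in>set gs. (m, g) \<in> C) \<longrightarrow>
        (\<exists>h. (m, h) \<in> C \<and> (\<forall>xs\<in>tuples A m. h xs = f (map (\<lambda>g. g xs) gs))))"

text \<open>A height 1 condition: a set of function symbols, their arities, and a set of
identities (s1, pi, s2, rho) meaning s1(x_pi(1),...,x_pi(n)) = s2(x_rho(1),...,x_rho(m)),
variables being natural numbers.\<close>

type_synonym 's h1cond = "'s set \<times> ('s \<Rightarrow> nat) \<times> ('s \<times> nat list \<times> 's \<times> nat list) set"

definition h1_sat :: "'c set \<Rightarrow> 'c operation set \<Rightarrow> 's h1cond \<Rightarrow> bool" where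
  "h1_sat A C \<Sigma> \<longleftrightarrow> (case \<Sigma> of (S, ar, Ids) \<Rightarrow>
     (\<exists>F. (\<forall>s\<in>S. (ar s, F s) \<in> C) \<and>
          (\<forall>(s1, \<pi>, s2, \<rho>)\<in>Ids. \<forall>v. (\<forall>i. v i \<in> A) \<longrightarrow> F s1 (map v \<pi>) = F s2 (map v \<rho>))))"

text \<open>Implication of height 1 conditions, over clones on sets of elements of type 'c;
since the theorem is stated with 'c a free (hence universally quantified) type variable,
this expresses implication over clones on arbitrary sets.\<close>
definition h1_implies :: "'c itself \<Rightarrow> 's h1cond \<Rightarrow> 't h1cond \<Rightarrow> bool" where
  "h1_implies _ \<Sigma> \<Sigma>' \<longleftrightarrow> (\<forall>(A :: 'c set) C. clone A C \<longrightarrow> h1_sat A C \<Sigma> \<longrightarrow> h1_sat A C \<Sigma>')"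

text \<open>Sigma_G: symbol Inl v is the ternary f_v, symbol Inr (u,v) the 6-ary g_(u,v);
variables x, y, z are 0, 1, 2.\<close>
definition Sigma_graph :: "'a set \<Rightarrow> ('a \<times> 'a) set \<Rightarrow> ('a + ('a \<times> 'a)) h1cond" where
  "Sigma_graph V E =
    (Inl ` V \<union> Inr ` E,
     (\<lambda>s. case s of Inl _ \<Rightarrow> 3 | Inr _ \<Rightarrow> 6),
     {(Inl u, [0, 1, 2], Inr (u, v), [0, 1, 0, 2, 1, 2]) | u v. (u, v) \<in> E} \<union>
     {(Inl v, [0, 1, 2], Inr (u, v), [1, 0, 2, 0, 2, 1]) | u v. (u, v) \<in> E})"

text \<open>Vertices of W live in 'a + 'b + 'n; the vertices x, x', y, y' of N are identified
with g, g' (of G) and h, h' (of H) respectively.\<close>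

definition embN :: "'a \<Rightarrow> 'a \<Rightarrow> 'b \<Rightarrow> 'b \<Rightarrow> 'n \<Rightarrow> 'n \<Rightarrow> 'n \<Rightarrow> 'n \<Rightarrow> 'n \<Rightarrow> 'a + 'b + 'n" where
  "embN g g' h h' x x' y y' v =
     (if v = x then Inl g else if v = x' then Inl g'
      else if v = y then Inr (Inl h) else if v = y' then Inr (Inl h')
      else Inr (Inr v))"

definition glue_V ::
  "'a set \<Rightarrow> 'b set \<Rightarrow> 'n set \<Rightarrow> 'a \<Rightarrow> 'a \<Rightarrow> 'b \<Rightarrow> 'b \<Rightarrow> 'n \<Rightarrow> 'n \<Rightarrow> 'n \<Rightarrow> 'n \<Rightarrow> ('a + 'b + 'n) set" where
  "glue_V VG VH VN g g' h h' x x' y y' =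
     Inl ` VG \<union> (\<lambda>v. Inr (Inl v)) ` VH \<union> embN g g' h h' x x' y y' ` VN"

definition glue_E ::
  "('a \<times> 'a) set \<Rightarrow> ('b \<times> 'b) set \<Rightarrow> ('n \<times> 'n) set \<Rightarrow> 'a \<Rightarrow> 'a \<Rightarrow> 'b \<Rightarrow> 'b \<Rightarrow> 'n \<Rightarrow> 'n \<Rightarrow> 'n \<Rightarrow> 'n
     \<Rightarrow> (('a + 'b + 'n) \<times> ('a + 'b + 'n)) set" where
  "glue_E EG EH EN g g' h h' x x' y y' =
     (\<lambda>(u, v). (Inl u, Inl v)) ` remove_edge EG g g' \<union>
     (\<lambda>(u, v). (Inr (Inl u), Inr (Inl v))) ` remove_edge EH h h' \<union>
     (\<lambda>(u, v). (embN g g' h h' x x' y y' u, embN g g' h h' x x' y y' v)) ` EN"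

end

theory Submission
  imports Defs
begin


definition Pl :: "nat list" where "Pl = [0,1,0,2,1,2]"
definition Ql :: "nat list" where "Ql = [1,0,2,0,2,1]"
definition idx :: "nat \<Rightarrow> nat \<Rightarrow> nat" where
  "idx p q = (if p=0\<and>q=1 then 0 else if p=1\<and>q=0 then 1 else if p=0\<and>q=2 then 2
     else if p=2\<and>q=0 then 3 else if p=1\<and>q=2 then 4 else 5)"

definition gedge :: "'c set \<Rightarrow> 'c operation set \<Rightarrow> ('c list \<Rightarrow> 'c) \<Rightarrow> ('c list \<Rightarrow> 'c) \<Rightarrow> bool" where
  "gedge A C t1 t2 \<longleftrightarrow> (\<exists>s. (6,s)\<in>C \<and> (\<forall>v. (\<forall>i. v i \<in> A) \<longrightarrow>
      t1 (map v [0,1,2]) = s (map v Pl) \<and> t2 (map v [0,1,2]) = s (map v Ql)))"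

lemma PQ: "i < 6 \<Longrightarrow> Pl ! i < 3 \<and> Ql ! i < 3 \<and> Pl ! i \<noteq> Ql ! i"
proof -
  assume "i < 6" then have "i \<in> {0,1,2,3,4,5}" by auto
  then show ?thesis by (auto simp: Pl_def Ql_def)
qed

lemma idx: "p<3 \<Longrightarrow> q<3 \<Longrightarrow> p\<noteq>q \<Longrightarrow> Pl ! idx p q = p \<and> Ql ! idx p q = q \<and> idx p q < 6"
proof -
  assume "p<3" "q<3" "p\<noteq>q"
  then have "p \<in> {0,1,2}" "q\<in>{0,1,2}" by auto
  with \<open>p\<noteq>q\<close> show ?thesis by (auto simp: Pl_def Ql_def idx_def)
qed

lemma map_tuples: "\<forall>i. v i \<in> A \<Longrightarrow> map v L \<in> tuples A (length L)"
  by (auto simp: tuples_def)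

lemma clone_minor:
  assumes cl: "clone A C" and f: "(n,f)\<in>C" and sg: "\<forall>i<n. \<sigma> i < m"
  shows "\<exists>h. (m,h)\<in>C \<and> (\<forall>xs\<in>tuples A m. h xs = f (map (\<lambda>i. xs ! \<sigma> i) [0..<n]))"
proof -
  from cl have proj: "\<forall>n i. i<n \<longrightarrow> (\<exists>p. (n,p)\<in>C \<and> (\<forall>xs\<in>tuples A n. p xs = xs!i))"
    and comp: "\<forall>n f m gs. (n, f) \<in> C \<longrightarrow> length gs = n \<longrightarrow> (\<forall>g\<in>set gs. (m, g) \<in> C) \<longrightarrow>
        (\<exists>h. (m, h) \<in> C \<and> (\<forall>xs\<in>tuples A m. h xs = f (map (\<lambda>g. g xs) gs)))"
    by (simp_all add: clone_def)
  define pr where "pr i = (SOME p. (m,p)\<in>C \<and> (\<forall>xs\<in>tuples A m. p xs = xs ! \<sigma> i))" for i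
  have pr: "(m, pr i)\<in>C \<and> (\<forall>xs\<in>tuples A m. pr i xs = xs ! \<sigma> i)" if "i<n" for i
  proof -
    have "\<sigma> i < m" using sg that by simp
    from proj[rule_format, OF this] show ?thesis unfolding pr_def by (rule someI_ex)
  qed
  have g: "\<And>g. g\<in>set (map pr [0..<n]) \<Longrightarrow> (m, g) \<in> C" using pr by auto
  have l: "length (map pr [0..<n]) = n" by simp
  from comp[rule_format, OF f l g] obtain h where h: "(m,h)\<in>C" "\<forall>xs\<in>tuples A m. h xs = f (map (\<lambda>g. g xs) (map pr [0..<n]))"
    by blast
  show ?thesis
  proof (intro exI conjI ballI)
    show "(m,h)\<in>C" by fact
    fix xs assume xs: "xs \<in> tuples A m"
    have "map (\<lambda>g. g xs) (map pr [0..<n]) = map (\<lambda>i. pr i xs) [0..<n]" by simp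
    also have "\<dots> = map (\<lambda>i. xs ! \<sigma> i) [0..<n]"
    proof (rule map_cong)
      fix i assume "i \<in> set [0..<n]"
      then have "i < n" by simp
      then show "pr i xs = xs ! \<sigma> i" using pr xs by blast
    qed simp
    finally have eq: "map (\<lambda>g. g xs) (map pr [0..<n]) = map (\<lambda>i. xs ! \<sigma> i) [0..<n]" .
    have "h xs = f (map (\<lambda>g. g xs) (map pr [0..<n]))" using h(2) xs by blast
    also have "\<dots> = f (map (\<lambda>i. xs ! \<sigma> i) [0..<n])" by (simp only: eq)
    finally show "h xs = f (map (\<lambda>i. xs ! \<sigma> i) [0..<n])" .
  qed
qed

lemma gen_edge:
  assumes cl: "clone A C" and s: "(6,s)\<in>C" and ab: "\<forall>i<6. a i < 3 \<and> b i < 3 \<and> a i \<noteq> b i"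
    and ta: "\<forall>xs\<in>tuples A 3. ta xs = s (map (\<lambda>i. xs ! a i) [0..<6])"
    and tb: "\<forall>xs\<in>tuples A 3. tb xs = s (map (\<lambda>i. xs ! b i) [0..<6])"
  shows "gedge A C ta tb"
proof -
  have "\<forall>i<6. idx (a i) (b i) < 6" using ab idx by blast
  from clone_minor[OF cl s this] obtain s' where s': "(6,s')\<in>C"
    "\<forall>xs\<in>tuples A 6. s' xs = s (map (\<lambda>i. xs ! idx (a i) (b i)) [0..<6])" by blast
  show ?thesis unfolding gedge_def
  proof (intro exI conjI allI impI)
    show "(6,s')\<in>C" by fact
    fix v :: "nat \<Rightarrow> _" assume v: "\<forall>i. v i \<in> A"
    have t3: "map v [0,1,2] \<in> tuples A 3" using v by (auto simp: tuples_def)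
    have tP: "map v Pl \<in> tuples A 6" using v by (auto simp: tuples_def Pl_def)
    have tQ: "map v Ql \<in> tuples A 6" using v by (auto simp: tuples_def Ql_def)
    have n3: "map v [0,1,2] ! k = v k" if "k < 3" for k
    proof -
      have "k \<in> {0,1,2}" using that by auto
      then show ?thesis by auto
    qed
    have lP: "length Pl = 6" "length Ql = 6" by (simp_all add: Pl_def Ql_def)
    have "map (\<lambda>i. map v [0,1,2] ! a i) [0..<6] = map (\<lambda>i. map v Pl ! idx (a i) (b i)) [0..<6]"
      using ab idx lP n3 by auto
    then have "s (map (\<lambda>i. map v [0,1,2] ! a i) [0..<6]) = s (map (\<lambda>i. map v Pl ! idx (a i) (b i)) [0..<6])" by (rule arg_cong)
    then show "ta (map v [0,1,2]) = s' (map v Pl)" using ta[rule_format, OF t3] s'(2)[rule_format, OF tP] by simp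
    have "map (\<lambda>i. map v [0,1,2] ! b i) [0..<6] = map (\<lambda>i. map v Ql ! idx (a i) (b i)) [0..<6]"
      using ab idx lP n3 by auto
    then have "s (map (\<lambda>i. map v [0,1,2] ! b i) [0..<6]) = s (map (\<lambda>i. map v Ql ! idx (a i) (b i)) [0..<6])" by (rule arg_cong)
    then show "tb (map v [0,1,2]) = s' (map v Ql)" using tb[rule_format, OF t3] s'(2)[rule_format, OF tQ] by simp
  qed
qed

lemma gedge_cong:
  assumes "gedge A C t1 t2" "\<forall>xs\<in>tuples A 3. t1' xs = t1 xs" "\<forall>xs\<in>tuples A 3. t2' xs = t2 xs"
  shows "gedge A C t1' t2'"
proof -
  have "map v [0,1,2] \<in> tuples A 3" if "\<forall>i. v i \<in> A" for v :: "nat \<Rightarrow> _"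
    using that by (auto simp: tuples_def)
  with assms show ?thesis unfolding gedge_def by metis
qed

lemma assemble:
  fixes \<kappa> :: "nat \<Rightarrow> 'w \<Rightarrow> nat"
  assumes cl: "clone A C" and s: "(6,s)\<in>C" and kr: "\<forall>i<6. \<forall>w. \<kappa> i w < 3"
    and Tz: "\<forall>w\<in>V. w\<in>P \<longrightarrow> (3, Tz w)\<in>C"
    and E: "\<forall>(u,w)\<in>E. (u\<in>P \<and> w\<in>P \<and> gedge A C (Tz u) (Tz w)) \<or>
       ((\<forall>i<6. \<kappa> i u \<noteq> \<kappa> i w) \<and>
        (u\<in>P \<longrightarrow> (\<forall>xs\<in>tuples A 3. Tz u xs = s (map (\<lambda>i. xs ! \<kappa> i u) [0..<6]))) \<and>
        (w\<in>P \<longrightarrow> (\<forall>xs\<in>tuples A 3. Tz w xs = s (map (\<lambda>i. xs ! \<kappa> i w) [0..<6]))))"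
  shows "\<exists>T. (\<forall>w\<in>V. (3, T w)\<in>C) \<and> (\<forall>(u,w)\<in>E. gedge A C (T u) (T w))"
proof -
  define Gn where "Gn w = (SOME t. (3,t)\<in>C \<and> (\<forall>xs\<in>tuples A 3. t xs = s (map (\<lambda>i. xs ! \<kappa> i w) [0..<6])))" for w
  have Gn: "(3,Gn w)\<in>C \<and> (\<forall>xs\<in>tuples A 3. Gn w xs = s (map (\<lambda>i. xs ! \<kappa> i w) [0..<6]))" for w
  proof -
    have "\<forall>i<6. \<kappa> i w < 3" using kr by blast
    from clone_minor[OF cl s this] show ?thesis unfolding Gn_def by (rule someI_ex)
  qed
  define T where "T w = (if w\<in>P then Tz w else Gn w)" for w
  show ?thesis
  proof (intro exI conjI ballI)
    fix w assume "w\<in>V" then show "(3, T w)\<in>C" using Tz Gn by (simp add: T_def)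
  next
    fix e assume "e\<in>E"
    then obtain u w where e: "e = (u,w)" "(u,w)\<in>E" by (cases e) auto
    from E e(2) consider "u\<in>P \<and> w\<in>P \<and> gedge A C (Tz u) (Tz w)" |
       "(\<forall>i<6. \<kappa> i u \<noteq> \<kappa> i w) \<and>
        (u\<in>P \<longrightarrow> (\<forall>xs\<in>tuples A 3. Tz u xs = s (map (\<lambda>i. xs ! \<kappa> i u) [0..<6]))) \<and>
        (w\<in>P \<longrightarrow> (\<forall>xs\<in>tuples A 3. Tz w xs = s (map (\<lambda>i. xs ! \<kappa> i w) [0..<6])))" by blast
    then show "case e of (u,w) \<Rightarrow> gedge A C (T u) (T w)"
    proof cases
      case 1 then show ?thesis using e by (simp add: T_def)
    next
      case 2
      have "gedge A C (Gn u) (Gn w)"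
        by (rule gen_edge[OF cl s]) (use 2 kr Gn in auto)
      moreover have "\<forall>xs\<in>tuples A 3. T u xs = Gn u xs" using 2 Gn by (simp add: T_def)
      moreover have "\<forall>xs\<in>tuples A 3. T w xs = Gn w xs" using 2 Gn by (simp add: T_def)
      ultimately show ?thesis using e gedge_cong by fastforce
    qed
  qed
qed

lemma sat_to_T:
  assumes "h1_sat A C (Sigma_graph V E)"
  shows "\<exists>T. (\<forall>w\<in>V. (3, T w)\<in>C) \<and> (\<forall>(u,w)\<in>E. gedge A C (T u) (T w))"
proof -
  from assms obtain F where F1: "\<forall>s\<in>Inl ` V \<union> Inr ` E. ((case s of Inl _ \<Rightarrow> (3::nat) | Inr _ \<Rightarrow> 6), F s) \<in> C"
    and F2: "\<forall>(s1, \<pi>, s2, \<rho>)\<in>{(Inl u, [0::nat, 1, 2], Inr (u, v), [0::nat, 1, 0, 2, 1, 2]) | u v. (u, v) \<in> E} \<union>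
     {(Inl v, [0::nat, 1, 2], Inr (u, v), [1::nat, 0, 2, 0, 2, 1]) | u v. (u, v) \<in> E}.
       \<forall>v. (\<forall>i. v i \<in> A) \<longrightarrow> F s1 (map v \<pi>) = F s2 (map v \<rho>)"
    unfolding h1_sat_def Sigma_graph_def by auto
  show ?thesis
  proof (intro exI conjI ballI)
    fix w assume "w\<in>V"
    then have "Inl w \<in> Inl ` V \<union> Inr ` E" by blast
    from bspec[OF F1 this] show "(3, F (Inl w))\<in>C" by simp
  next
    fix e assume "e\<in>E"
    then obtain u w where e: "e = (u,w)" "(u,w)\<in>E" by (cases e) auto
    have "Inr (u,w) \<in> Inl ` V \<union> Inr ` E" using e by blast
    from bspec[OF F1 this] have 6: "(6, F (Inr (u,w)))\<in>C" by simp
    have i1: "\<forall>v. (\<forall>i. v i \<in> A) \<longrightarrow> F (Inl u) (map v [0,1,2]) = F (Inr (u,w)) (map v [0::nat, 1, 0, 2, 1, 2])"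
      using F2 e(2) by blast
    have i2: "\<forall>v. (\<forall>i. v i \<in> A) \<longrightarrow> F (Inl w) (map v [0,1,2]) = F (Inr (u,w)) (map v [1::nat, 0, 2, 0, 2, 1])"
      using F2 e(2) by blast
    show "case e of (u,w) \<Rightarrow> gedge A C (F (Inl u)) (F (Inl w))"
      unfolding e gedge_def Pl_def Ql_def using 6 i1 i2 by auto
  qed
qed

lemma T_to_sat:
  fixes V :: "'a set"
  assumes T1: "\<forall>w\<in>V. (3, T w)\<in>C" and T2: "\<forall>(u,w)\<in>E. gedge A C (T u) (T w)"
  shows "h1_sat A C (Sigma_graph V E)"
proof -
  define Q where "Q e s \<longleftrightarrow> (6,s)\<in>C \<and> (\<forall>v. (\<forall>i. v i \<in> A) \<longrightarrow>
      T (fst e) (map v [0,1,2]) = s (map v Pl) \<and> T (snd e) (map v [0,1,2]) = s (map v Ql))" for e s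
  define F where "F s = (case s of Inl u \<Rightarrow> T u | Inr e \<Rightarrow> (SOME s. Q e s))" for s
  have FQ: "Q e (F (Inr e))" if "e\<in>E" for e
  proof -
    obtain u w where "e = (u,w)" by (cases e)
    with T2 that have "\<exists>s. Q e s" unfolding gedge_def Q_def by auto
    then show ?thesis unfolding F_def by (simp add: someI_ex)
  qed
  show ?thesis unfolding h1_sat_def Sigma_graph_def
  proof (simp only: prod.case, intro exI conjI ballI)
    fix s assume "s \<in> Inl ` V \<union> Inr ` E"
    then show "((case s of Inl _ \<Rightarrow> (3::nat) | Inr _ \<Rightarrow> 6), F s) \<in> C"
      using T1 FQ by (auto simp: F_def Q_def)
  next
    fix x assume "x \<in> {(Inl u :: 'a + ('a \<times> 'a), [0::nat, 1, 2], Inr (u, v) :: 'a + ('a \<times> 'a), [0::nat, 1, 0, 2, 1, 2]) | u v. (u, v) \<in> E} \<union>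
     {(Inl v :: 'a + ('a \<times> 'a), [0::nat, 1, 2], Inr (u, v) :: 'a + ('a \<times> 'a), [1::nat, 0, 2, 0, 2, 1]) | u v. (u, v) \<in> E}"
    then show "case x of (s1, \<pi>, s2, \<rho>) \<Rightarrow> \<forall>v. (\<forall>i. v i \<in> A) \<longrightarrow> F s1 (map v \<pi>) = F s2 (map v \<rho>)"
    proof
      assume "x \<in> {(Inl u :: 'a + ('a \<times> 'a), [0::nat, 1, 2], Inr (u, v) :: 'a + ('a \<times> 'a), [0::nat, 1, 0, 2, 1, 2]) | u v. (u, v) \<in> E}"
      then obtain u w where "x = (Inl u :: 'a + ('a \<times> 'a), [0::nat, 1, 2], Inr (u, w) :: 'a + ('a \<times> 'a), [0::nat, 1, 0, 2, 1, 2])" "(u,w)\<in>E" by blast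
      then show ?thesis using FQ[of "(u,w)"] by (auto simp: F_def Q_def Pl_def)
    next
      assume "x \<in> {(Inl v :: 'a + ('a \<times> 'a), [0::nat, 1, 2], Inr (u, v) :: 'a + ('a \<times> 'a), [1::nat, 0, 2, 0, 2, 1]) | u v. (u, v) \<in> E}"
      then obtain u w where "x = (Inl w :: 'a + ('a \<times> 'a), [0::nat, 1, 2], Inr (u, w) :: 'a + ('a \<times> 'a), [1::nat, 0, 2, 0, 2, 1])" "(u,w)\<in>E" by blast
      then show ?thesis using FQ[of "(u,w)"] by (auto simp: F_def Q_def Ql_def)
    qed
  qed
qed



lemma K3E: "(a,b)\<in>K3_E \<longleftrightarrow> a\<in>K3_V \<and> b\<in>K3_V \<and> a\<noteq>b"
  by (simp add: K3_E_def)

lemma hom_restore: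
  assumes "hom_K3 V (remove_edge E u w) c" "c u \<noteq> c w" "u\<in>V" "w\<in>V"
  shows "hom_K3 V E c"
  using assms unfolding hom_K3_def graph_hom_def remove_edge_def K3E by auto

lemma crit_col:
  assumes "finite_loopless_graph V E" "\<not> three_colorable V E" "critical_edge V E u w"
  shows "\<exists>c. hom_K3 V (remove_edge E u w) c \<and> c u = c w \<and> u\<in>V \<and> w\<in>V \<and> u\<noteq>w"
proof -
  from assms(3) obtain c where c: "hom_K3 V (remove_edge E u w) c" and uw: "(u,w)\<in>E"
    unfolding critical_edge_def three_colorable_def by blast
  have uv: "u\<in>V" "w\<in>V" "u\<noteq>w" using assms(1) uw unfolding finite_loopless_graph_def by auto
  have "c u = c w"
  proof (rule ccontr)
    assume "c u \<noteq> c w"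
    with hom_restore[OF c this uv(1,2)] assms(2) show False unfolding three_colorable_def by blast
  qed
  with c uv show ?thesis by blast
qed

lemma embN_in: "u\<in>VN \<Longrightarrow> embN g g' h h' x x' y y' u \<in> glue_V VG VH VN g g' h h' x x' y y'"
  by (simp add: glue_V_def)

lemma embN_E: "(u,w)\<in>EN \<Longrightarrow> (embN g g' h h' x x' y y' u, embN g g' h h' x x' y y' w) \<in> glue_E EG EH EN g g' h h' x x' y y'"
  unfolding glue_E_def by (rule UnI2) (rule image_eqI[where x="(u,w)"], auto)

lemma G_E: "(u,w)\<in>remove_edge EG g g' \<Longrightarrow> (Inl u, Inl w) \<in> glue_E EG EH EN g g' h h' x x' y y'"
  unfolding glue_E_def by (rule UnI1, rule UnI1) (rule image_eqI[where x="(u,w)"], auto)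

lemma H_E: "(u,w)\<in>remove_edge EH h h' \<Longrightarrow> (Inr (Inl u), Inr (Inl w)) \<in> glue_E EG EH EN g g' h h' x x' y y'"
  unfolding glue_E_def by (rule UnI1, rule UnI2) (rule image_eqI[where x="(u,w)"], auto)

lemma embN_vals:
  assumes "distinct [x, x', y, y']"
  shows "embN g g' h h' x x' y y' x = Inl g" "embN g g' h h' x x' y y' x' = Inl g'"
    "embN g g' h h' x x' y y' y = Inr (Inl h)" "embN g g' h h' x x' y y' y' = Inr (Inl h')"
    "u \<notin> {x,x',y,y'} \<Longrightarrow> embN g g' h h' x x' y y' u = Inr (Inr u)"
  using assms by (auto simp: embN_def)

lemma glue_E_cases:
  assumes "(a,b) \<in> glue_E EG EH EN g g' h h' x x' y y'"
  obtains (G) u w where "a = Inl u" "b = Inl w" "(u,w) \<in> remove_edge EG g g'"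
   | (H) u w where "a = Inr (Inl u)" "b = Inr (Inl w)" "(u,w) \<in> remove_edge EH h h'"
   | (N) u w where "a = embN g g' h h' x x' y y' u" "b = embN g g' h h' x x' y y' w" "(u,w)\<in>EN"
  using assms unfolding glue_E_def by auto

lemma glue_V_cases:
  assumes "a \<in> glue_V VG VH VN g g' h h' x x' y y'"
  obtains (G) u where "a = Inl u" "u\<in>VG" | (H) u where "a = Inr (Inl u)" "u\<in>VH"
   | (N) u where "a = embN g g' h h' x x' y y' u" "u\<in>VN"
  using assms unfolding glue_V_def by auto

lemma part1:
  assumes G: "finite_loopless_graph VG EG" "\<not> three_colorable VG EG"
    and H: "finite_loopless_graph VH EH" "\<not> three_colorable VH EH"
    and e: "critical_edge VG EG g g'"
    and f: "critical_edge VH EH h h'"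
    and Nverts: "x \<in> VN" "x' \<in> VN" "y \<in> VN" "y' \<in> VN"
    and Ndist: "distinct [x, x', y, y']"
    and N1: "\<forall>c. hom_K3 VN EN c \<longrightarrow> ((c x \<noteq> c x') \<noteq> (c y \<noteq> c y'))"
  shows "\<not> three_colorable (glue_V VG VH VN g g' h h' x x' y y') (glue_E EG EH EN g g' h h' x x' y y')"
proof
  let ?VW = "glue_V VG VH VN g g' h h' x x' y y'" and ?EW = "glue_E EG EH EN g g' h h' x x' y y'"
  let ?em = "embN g g' h h' x x' y y'"
  assume "three_colorable ?VW ?EW"
  then obtain c where c: "hom_K3 ?VW ?EW c" unfolding three_colorable_def by blast
  then have cv: "\<forall>w\<in>?VW. c w \<in> K3_V" and ce: "\<forall>(u,w)\<in>?EW. (c u, c w) \<in> K3_E"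
    unfolding hom_K3_def graph_hom_def by auto
  have "hom_K3 VN EN (c \<circ> ?em)"
    unfolding hom_K3_def graph_hom_def
  proof (intro conjI ballI)
    fix v assume v: "v\<in>VN" show "(c \<circ> ?em) v \<in> K3_V" using bspec[OF cv embN_in[OF v]] by simp
  next
    fix p assume "p \<in> EN"
    then obtain u w where p: "p = (u,w)" and uw: "(u,w)\<in>EN" by (cases p) auto
    show "case p of (u, v) \<Rightarrow> ((c \<circ> ?em) u, (c \<circ> ?em) v) \<in> K3_E"
      using bspec[OF ce embN_E[OF uw]] p by simp
  qed
  with N1 have "((c \<circ> ?em) x \<noteq> (c \<circ> ?em) x') \<noteq> ((c \<circ> ?em) y \<noteq> (c \<circ> ?em) y')" by blast
  then have alt: "(c (Inl g) \<noteq> c (Inl g')) \<or> (c (Inr (Inl h)) \<noteq> c (Inr (Inl h')))"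
    by (simp add: embN_vals[OF Ndist])
  obtain cg where "hom_K3 VG (remove_edge EG g g') cg" "g\<in>VG" "g'\<in>VG" using crit_col[OF G e] by blast
  obtain ch where "hom_K3 VH (remove_edge EH h h') ch" "h\<in>VH" "h'\<in>VH" using crit_col[OF H f] by blast
  from alt show False
  proof
    assume ne: "c (Inl g) \<noteq> c (Inl g')"
    have "hom_K3 VG (remove_edge EG g g') (c \<circ> Inl)"
      unfolding hom_K3_def graph_hom_def
    proof (intro conjI ballI)
      fix v assume "v\<in>VG" then show "(c \<circ> Inl) v \<in> K3_V" using cv by (simp add: glue_V_def)
    next
      fix p assume "p \<in> remove_edge EG g g'"
      then obtain u w where p: "p = (u,w)" and uw: "(u,w)\<in>remove_edge EG g g'" by (cases p) auto
      then show "case p of (u, v) \<Rightarrow> ((c \<circ> Inl) u, (c \<circ> Inl) v) \<in> K3_E"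
        using bspec[OF ce G_E[OF uw]] p by simp
    qed
    from hom_restore[OF this] ne \<open>g\<in>VG\<close> \<open>g'\<in>VG\<close> G(2) show False
      unfolding three_colorable_def by auto
  next
    assume ne: "c (Inr (Inl h)) \<noteq> c (Inr (Inl h'))"
    have "hom_K3 VH (remove_edge EH h h') (c \<circ> (\<lambda>v. Inr (Inl v)))"
      unfolding hom_K3_def graph_hom_def
    proof (intro conjI ballI)
      fix v assume "v\<in>VH" then show "(c \<circ> (\<lambda>v. Inr (Inl v))) v \<in> K3_V" using cv by (simp add: glue_V_def)
    next
      fix p assume "p \<in> remove_edge EH h h'"
      then obtain u w where p: "p = (u,w)" and uw: "(u,w)\<in>remove_edge EH h h'" by (cases p) auto
      then show "case p of (u, v) \<Rightarrow> ((c \<circ> (\<lambda>v. Inr (Inl v))) u, (c \<circ> (\<lambda>v. Inr (Inl v))) v) \<in> K3_E"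
        using bspec[OF ce H_E[OF uw]] p by simp
    qed
    from hom_restore[OF this] ne \<open>h\<in>VH\<close> \<open>h'\<in>VH\<close> H(2) show False
      unfolding three_colorable_def by auto
  qed
qed


lemma hom_vert: "hom_K3 V E c \<Longrightarrow> v\<in>V \<Longrightarrow> c v \<in> K3_V"
  unfolding hom_K3_def graph_hom_def by blast

lemma hom_edge: "hom_K3 V E c \<Longrightarrow> (u,w)\<in>E \<Longrightarrow> (c u, c w) \<in> K3_E"
  unfolding hom_K3_def graph_hom_def by blast

lemma part2:
  assumes G: "finite_loopless_graph VG EG" "\<not> three_colorable VG EG"
    and H: "finite_loopless_graph VH EH" "\<not> three_colorable VH EH"
    and e: "critical_edge VG EG g g'"
    and f: "critical_edge VH EH h h'"
    and N: "finite_loopless_graph VN EN"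
    and Ndist: "distinct [x, x', y, y']"
    and d: "(d1, d2) \<in> EN"
    and N3: "\<forall>c. (\<forall>v\<in>{x, x', y, y'}. c v \<in> K3_V) \<longrightarrow> c x = c x' \<longrightarrow> c y = c y' \<longrightarrow>
               (\<exists>c'. hom_K3 VN (remove_edge EN d1 d2) c' \<and> (\<forall>v\<in>{x, x', y, y'}. c' v = c v))"
  shows "critical_edge (glue_V VG VH VN g g' h h' x x' y y') (glue_E EG EH EN g g' h h' x x' y y')
           (embN g g' h h' x x' y y' d1) (embN g g' h h' x x' y y' d2)"
proof -
  let ?VW = "glue_V VG VH VN g g' h h' x x' y y'" and ?EW = "glue_E EG EH EN g g' h h' x x' y y'"
  let ?em = "embN g g' h h' x x' y y'"
  obtain cG where cG: "hom_K3 VG (remove_edge EG g g') cG" "cG g = cG g'" "g\<in>VG" "g'\<in>VG"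
    using crit_col[OF G e] by blast
  obtain cH where cH: "hom_K3 VH (remove_edge EH h h') cH" "cH h = cH h'" "h\<in>VH" "h'\<in>VH"
    using crit_col[OF H f] by blast
  define c0 where "c0 v = (if v = x then cG g else if v = x' then cG g' else if v = y then cH h else cH h')" for v
  have c0x: "c0 x = cG g" "c0 x' = cG g'" "c0 y = cH h" "c0 y' = cH h'"
    using Ndist by (auto simp: c0_def)
  have "\<forall>v\<in>{x, x', y, y'}. c0 v \<in> K3_V"
    using c0x hom_vert[OF cG(1) cG(3)] hom_vert[OF cG(1) cG(4)] hom_vert[OF cH(1) cH(3)] hom_vert[OF cH(1) cH(4)]
    by auto
  moreover have "c0 x = c0 x'" "c0 y = c0 y'" using c0x cG(2) cH(2) by auto
  ultimately obtain c' where c': "hom_K3 VN (remove_edge EN d1 d2) c'" "\<forall>v\<in>{x, x', y, y'}. c' v = c0 v"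
    using N3 by blast
  define col where "col w = (case w of Inl a \<Rightarrow> cG a | Inr (Inl b) \<Rightarrow> cH b | Inr (Inr v) \<Rightarrow> c' v)" for w
  have colem: "col (?em u) = c' u" for u
  proof -
    consider "u = x" | "u = x'" | "u = y" | "u = y'" | "u \<notin> {x,x',y,y'}" by blast
    then show ?thesis
      by cases (use c' c0x in \<open>simp_all add: embN_vals[OF Ndist] col_def\<close>)
  qed
  have ENV: "EN \<subseteq> VN \<times> VN" using N unfolding finite_loopless_graph_def by blast
  have hom: "hom_K3 ?VW (remove_edge ?EW (?em d1) (?em d2)) col"
    unfolding hom_K3_def graph_hom_def
  proof (intro conjI ballI)
    fix w assume "w \<in> ?VW"
    then show "col w \<in> K3_V"
    proof (cases rule: glue_V_cases)
      case (G u) then show ?thesis using hom_vert[OF cG(1)] by (simp add: col_def)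
    next
      case (H u) then show ?thesis using hom_vert[OF cH(1)] by (simp add: col_def)
    next
      case (N u) then show ?thesis using hom_vert[OF c'(1)] colem by simp
    qed
  next
    fix p assume p: "p \<in> remove_edge ?EW (?em d1) (?em d2)"
    then obtain a b where ab: "p = (a,b)" "(a,b) \<in> ?EW" "(a,b) \<noteq> (?em d1, ?em d2)" "(a,b) \<noteq> (?em d2, ?em d1)"
      unfolding remove_edge_def by (cases p) auto
    from ab(2) have "(col a, col b) \<in> K3_E"
    proof (cases rule: glue_E_cases)
      case (G u w) then show ?thesis using hom_edge[OF cG(1)] by (simp add: col_def)
    next
      case (H u w) then show ?thesis using hom_edge[OF cH(1)] by (simp add: col_def)
    next
      case (N u w)
      then have "(u,w) \<in> remove_edge EN d1 d2" using ab(3,4) unfolding remove_edge_def by auto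
      then show ?thesis using hom_edge[OF c'(1)] colem N by simp
    qed
    then show "case p of (u, v) \<Rightarrow> (col u, col v) \<in> K3_E" using ab(1) by simp
  qed
  show ?thesis unfolding critical_edge_def three_colorable_def
  proof (rule conjI)
    show "(?em d1, ?em d2) \<in> ?EW" by (rule embN_E[OF d])
    show "\<exists>c. hom_K3 ?VW (remove_edge ?EW (?em d1) (?em d2)) c"
      by (rule exI[where x=col]) (fact hom)
  qed
qed


lemma agree_conv:
  assumes t: "\<forall>v. (\<forall>i. v i \<in> A) \<longrightarrow> t (map v [0,1,2]) = s (map v L)"
    and L: "length L = 6" "\<forall>j\<in>set L. j < 3"
  shows "\<forall>xs\<in>tuples A 3. t xs = s (map (\<lambda>i. xs ! (L ! i)) [0..<6])"
proof
  fix xs assume xs: "xs \<in> tuples A 3"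
  then have len: "length xs = 3" and sub: "set xs \<subseteq> A" by (auto simp: tuples_def)
  define v where "v j = (if j < 3 then xs ! j else xs ! 0)" for j
  have vA: "\<forall>i. v i \<in> A" using len sub by (auto simp: v_def)
  have "map v [0,1,2] = xs"
  proof (rule nth_equalityI)
    show "length (map v [0,1,2]) = length xs" using len by simp
    fix i assume "i < length (map v [0,1,2])"
    then have "i \<in> {0,1,2}" by auto
    then show "map v [0,1,2] ! i = xs ! i" by (auto simp: v_def)
  qed
  moreover have "map v L = map (\<lambda>i. xs ! (L ! i)) [0..<6]"
  proof (rule nth_equalityI)
    show "length (map v L) = length (map (\<lambda>i. xs ! (L ! i)) [0..<6])" using L by simp
    fix i assume "i < length (map v L)"
    then have i: "i < 6" using L by simp
    then have "L ! i < 3" using L nth_mem by fastforce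
    then show "map v L ! i = map (\<lambda>i. xs ! (L ! i)) [0..<6] ! i" using i L by (simp add: v_def)
  qed
  ultimately show "t xs = s (map (\<lambda>i. xs ! (L ! i)) [0..<6])" using t vA by metis
qed

lemma agree_shift:
  assumes "\<forall>xs\<in>tuples A 3. t xs = s (map (\<lambda>i. xs ! (L ! i)) [0..<6])" "\<forall>i<6. k i = L ! i"
  shows "\<forall>xs\<in>tuples A 3. t xs = s (map (\<lambda>i. xs ! k i) [0..<6])"
proof
  fix xs assume xs: "xs \<in> tuples A 3"
  have eq: "map (\<lambda>i. xs ! (L ! i)) [0..<6] = map (\<lambda>i. xs ! k i) [0..<6]"
    using assms(2) by (intro map_cong) auto
  have "t xs = s (map (\<lambda>i. xs ! (L ! i)) [0..<6])" using assms(1) xs by blast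
  also have "\<dots> = s (map (\<lambda>i. xs ! k i) [0..<6])" by (simp only: eq)
  finally show "t xs = s (map (\<lambda>i. xs ! k i) [0..<6])" .
qed

lemma PQ_set: "\<forall>j\<in>set Pl. j < 3" "\<forall>j\<in>set Ql. j < 3" "length Pl = 6" "length Ql = 6"
  by (simp_all add: Pl_def Ql_def)

lemma gedge_agree:
  assumes "gedge A C t1 t2"
  shows "\<exists>s. (6,s)\<in>C \<and> (\<forall>xs\<in>tuples A 3. t1 xs = s (map (\<lambda>i. xs ! (Pl ! i)) [0..<6])) \<and>
                        (\<forall>xs\<in>tuples A 3. t2 xs = s (map (\<lambda>i. xs ! (Ql ! i)) [0..<6]))"
proof -
  from assms obtain s where s: "(6,s)\<in>C" and
    st: "\<forall>v. (\<forall>i. v i \<in> A) \<longrightarrow> t1 (map v [0,1,2]) = s (map v Pl) \<and> t2 (map v [0,1,2]) = s (map v Ql)"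
    unfolding gedge_def by blast
  have "\<forall>v. (\<forall>i. v i \<in> A) \<longrightarrow> t1 (map v [0,1,2]) = s (map v Pl)" using st by blast
  from agree_conv[OF this PQ_set(3,1)] have 1: "\<forall>xs\<in>tuples A 3. t1 xs = s (map (\<lambda>i. xs ! (Pl ! i)) [0..<6])" .
  have "\<forall>v. (\<forall>i. v i \<in> A) \<longrightarrow> t2 (map v [0,1,2]) = s (map v Ql)" using st by blast
  from agree_conv[OF this PQ_set(4,2)] have 2: "\<forall>xs\<in>tuples A 3. t2 xs = s (map (\<lambda>i. xs ! (Ql ! i)) [0..<6])" .
  from s 1 2 show ?thesis by blast
qed

lemma K3V_lt: "k \<in> K3_V \<longleftrightarrow> k < 3"
  by (auto simp: K3_V_def)

lemma embN_Inl: "embN g g' h h' x x' y y' u = Inl a \<Longrightarrow> (u = x \<and> a = g) \<or> (u = x' \<and> a = g')"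
  by (auto simp: embN_def split: if_splits)

lemma embN_InrInl: "embN g g' h h' x x' y y' u = Inr (Inl b) \<Longrightarrow> (u = y \<and> b = h) \<or> (u = y' \<and> b = h')"
  by (auto simp: embN_def split: if_splits)


lemma part3G:
  fixes A :: "'c set" and VG :: "'a set" and VH :: "'b set" and VN :: "'n set"
  assumes G: "finite_loopless_graph VG EG"
    and H: "finite_loopless_graph VH EH" "\<not> three_colorable VH EH"
    and e: "critical_edge VG EG g g'"
    and f: "critical_edge VH EH h h'"
    and N: "finite_loopless_graph VN EN"
    and Ndist: "distinct [x, x', y, y']"
    and N2: "\<forall>c. (\<forall>v\<in>{x, x', y, y'}. c v \<in> K3_V) \<longrightarrow> ((c x \<noteq> c x') \<noteq> (c y \<noteq> c y')) \<longrightarrow>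
               (\<exists>c'. hom_K3 VN EN c' \<and> (\<forall>v\<in>{x, x', y, y'}. c' v = c v))"
    and cl: "clone A C" and sat: "h1_sat A C (Sigma_graph VG EG)"
  shows "h1_sat A C (Sigma_graph (glue_V VG VH VN g g' h h' x x' y y') (glue_E EG EH EN g g' h h' x x' y y'))"
proof -
  let ?VW = "glue_V VG VH VN g g' h h' x x' y y'" and ?EW = "glue_E EG EH EN g g' h h' x x' y y'"
  let ?em = "embN g g' h h' x x' y y'"
  obtain TG where TG1: "\<forall>w\<in>VG. (3, TG w)\<in>C" and TG2: "\<forall>(u,w)\<in>EG. gedge A C (TG u) (TG w)"
    using sat_to_T[OF sat] by blast
  have gg: "(g,g')\<in>EG" "g \<noteq> g'" "g\<in>VG" "g'\<in>VG"
    using e G unfolding critical_edge_def finite_loopless_graph_def by auto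
  obtain s where s: "(6,s)\<in>C" and sg: "\<forall>xs\<in>tuples A 3. TG g xs = s (map (\<lambda>i. xs ! (Pl ! i)) [0..<6])"
    and sg': "\<forall>xs\<in>tuples A 3. TG g' xs = s (map (\<lambda>i. xs ! (Ql ! i)) [0..<6])"
    using gedge_agree[of A C "TG g" "TG g'"] TG2 gg(1) by blast
  obtain cH where cH: "hom_K3 VH (remove_edge EH h h') cH" "cH h = cH h'" "h\<in>VH" "h'\<in>VH"
    using crit_col[OF H f] by blast
  have cHh: "cH h < 3" using hom_vert[OF cH(1) cH(3)] K3V_lt by blast
  define ci where "ci i v = (if v = x then Pl ! i else if v = x' then Ql ! i else cH h)" for i v
  define cN where "cN i = (SOME c'. hom_K3 VN EN c' \<and> (\<forall>v\<in>{x, x', y, y'}. c' v = ci i v))" for i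
  have cN: "hom_K3 VN EN (cN i) \<and> (\<forall>v\<in>{x, x', y, y'}. cN i v = ci i v)" if i: "i < 6" for i
  proof -
    have civ: "ci i x = Pl ! i" "ci i x' = Ql ! i" "ci i y = cH h" "ci i y' = cH h"
      using Ndist cH(2) by (auto simp: ci_def)
    have "\<forall>v\<in>{x, x', y, y'}. ci i v \<in> K3_V" using civ PQ[OF i] cHh K3V_lt by auto
    moreover have "(ci i x \<noteq> ci i x') \<noteq> (ci i y \<noteq> ci i y')" using civ PQ[OF i] by auto
    ultimately have "\<exists>c'. hom_K3 VN EN c' \<and> (\<forall>v\<in>{x, x', y, y'}. c' v = ci i v)"
      using N2 by blast
    then show ?thesis unfolding cN_def by (rule someI_ex)
  qed
  define \<kappa> where "\<kappa> i w = (case w of Inl a \<Rightarrow> (if a = g then Pl ! i else if a = g' then Ql ! i else 0)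
      | Inr (Inl b) \<Rightarrow> (if b\<in>VH then cH b else 0) | Inr (Inr v) \<Rightarrow> (if v\<in>VN then cN i v else 0))" for i w
  have kr: "\<forall>i<6. \<forall>w. \<kappa> i w < 3"
  proof (intro allI impI)
    fix i w assume i: "(i::nat) < 6"
    show "\<kappa> i w < 3"
    proof (cases w)
      case (Inl a) then show ?thesis using PQ[OF i] by (simp add: \<kappa>_def)
    next
      case (Inr z) then show ?thesis
        using hom_vert[OF cH(1)] hom_vert[OF conjunct1[OF cN[OF i]]] K3V_lt
        by (cases z) (auto simp: \<kappa>_def)
    qed
  qed
  have kem: "\<kappa> i (?em u) = cN i u" if i: "i < 6" and u: "u \<in> VN" for i u
  proof -
    have c2: "\<forall>v\<in>{x, x', y, y'}. cN i v = ci i v" using cN[OF i] by blast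
    have civ: "ci i x = Pl ! i" "ci i x' = Ql ! i" "ci i y = cH h" "ci i y' = cH h"
      using Ndist cH(2) by (auto simp: ci_def)
    consider "u = x" | "u = x'" | "u = y" | "u = y'" | "u \<notin> {x,x',y,y'}" by blast
    then show ?thesis
      by cases (use c2 civ gg(2) cH u in \<open>simp_all add: embN_vals[OF Ndist] \<kappa>_def\<close>)
  qed
  have kg: "\<forall>i<6. \<kappa> i (Inl g) = Pl ! i" "\<forall>i<6. \<kappa> i (Inl g') = Ql ! i"
    using gg(2) by (simp_all add: \<kappa>_def)
  define T0 :: "'a + 'b + 'n \<Rightarrow> 'c list \<Rightarrow> 'c" where "T0 w = (case w of Inl a \<Rightarrow> TG a | Inr _ \<Rightarrow> TG g)" for w
  have ag: "\<forall>xs\<in>tuples A 3. T0 (Inl g) xs = s (map (\<lambda>i. xs ! \<kappa> i (Inl g)) [0..<6])"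
    using agree_shift[OF sg kg(1)] by (simp add: T0_def)
  have ag': "\<forall>xs\<in>tuples A 3. T0 (Inl g') xs = s (map (\<lambda>i. xs ! \<kappa> i (Inl g')) [0..<6])"
    using agree_shift[OF sg' kg(2)] by (simp add: T0_def)
  have ENV: "EN \<subseteq> VN \<times> VN" using N unfolding finite_loopless_graph_def by blast
  have EHV: "remove_edge EH h h' \<subseteq> VH \<times> VH" using H(1) unfolding finite_loopless_graph_def remove_edge_def by blast
  have "\<exists>T. (\<forall>w\<in>?VW. (3, T w)\<in>C) \<and> (\<forall>(u,w)\<in>?EW. gedge A C (T u) (T w))"
  proof (rule assemble[OF cl s kr, where P = "range Inl" and Tz = T0])
    show "\<forall>w\<in>?VW. w \<in> range Inl \<longrightarrow> (3, T0 w) \<in> C"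
    proof (intro ballI impI)
      fix w assume w: "w \<in> ?VW" "w \<in> range Inl"
      then obtain a where a: "w = Inl a" by blast
      from w(1) have "a \<in> VG"
      proof (cases rule: glue_V_cases)
        case (G u) then show ?thesis using a by simp
      next
        case (H u) then show ?thesis using a by simp
      next
        case (N u) then show ?thesis using a embN_Inl[of g g' h h' x x' y y' u a] gg by auto
      qed
      then show "(3, T0 w) \<in> C" using TG1 a by (simp add: T0_def)
    qed
  next
    show "\<forall>(u,w)\<in>?EW. (u\<in>range Inl \<and> w\<in>range Inl \<and> gedge A C (T0 u) (T0 w)) \<or>
       ((\<forall>i<6. \<kappa> i u \<noteq> \<kappa> i w) \<and>
        (u\<in>range Inl \<longrightarrow> (\<forall>xs\<in>tuples A 3. T0 u xs = s (map (\<lambda>i. xs ! \<kappa> i u) [0..<6]))) \<and>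
        (w\<in>range Inl \<longrightarrow> (\<forall>xs\<in>tuples A 3. T0 w xs = s (map (\<lambda>i. xs ! \<kappa> i w) [0..<6]))))"
    proof (rule ballI)
      fix p assume p: "p \<in> ?EW"
      obtain a b where pab: "p = (a,b)" by (cases p)
      with p have ab: "(a,b) \<in> ?EW" by simp
      have agN: "\<forall>xs\<in>tuples A 3. T0 (?em u) xs = s (map (\<lambda>i. xs ! \<kappa> i (?em u)) [0..<6])"
        if "?em u \<in> range Inl" for u
      proof -
        from that obtain a where "?em u = Inl a" by blast
        from embN_Inl[OF this] have "?em u = Inl g \<or> ?em u = Inl g'" by (auto simp: embN_vals[OF Ndist])
        then show ?thesis using ag ag' by auto
      qed
      from ab have "(a\<in>range Inl \<and> b\<in>range Inl \<and> gedge A C (T0 a) (T0 b)) \<or>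
       ((\<forall>i<6. \<kappa> i a \<noteq> \<kappa> i b) \<and>
        (a\<in>range Inl \<longrightarrow> (\<forall>xs\<in>tuples A 3. T0 a xs = s (map (\<lambda>i. xs ! \<kappa> i a) [0..<6]))) \<and>
        (b\<in>range Inl \<longrightarrow> (\<forall>xs\<in>tuples A 3. T0 b xs = s (map (\<lambda>i. xs ! \<kappa> i b) [0..<6]))))"
      proof (cases rule: glue_E_cases)
        case (G u w)
        then have "(u,w)\<in>EG" unfolding remove_edge_def by blast
        then have "gedge A C (TG u) (TG w)" using TG2 by blast
        then show ?thesis using G by (simp add: T0_def)
      next
        case (H u w)
        then have uw: "u\<in>VH" "w\<in>VH" using EHV by blast+
        have "(cH u, cH w) \<in> K3_E" using hom_edge[OF cH(1) H(3)] .
        then have "cH u \<noteq> cH w" by (simp add: K3E)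
        then show ?thesis using H uw by (auto simp: \<kappa>_def)
      next
        case (N u w)
        then have uw: "u\<in>VN" "w\<in>VN" using ENV by blast+
        have "\<forall>i<6. \<kappa> i a \<noteq> \<kappa> i b"
        proof (intro allI impI)
          fix i assume i: "(i::nat) < 6"
          have "(cN i u, cN i w) \<in> K3_E" using hom_edge[OF conjunct1[OF cN[OF i]] N(3)] .
          then show "\<kappa> i a \<noteq> \<kappa> i b" using N kem[OF i uw(1)] kem[OF i uw(2)] by (simp add: K3E)
        qed
        moreover have "a\<in>range Inl \<longrightarrow> (\<forall>xs\<in>tuples A 3. T0 a xs = s (map (\<lambda>i. xs ! \<kappa> i a) [0..<6]))"
          using agN[of u] N(1) by simp
        moreover have "b\<in>range Inl \<longrightarrow> (\<forall>xs\<in>tuples A 3. T0 b xs = s (map (\<lambda>i. xs ! \<kappa> i b) [0..<6]))"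
          using agN[of w] N(2) by simp
        ultimately show ?thesis by blast
      qed
      then show "case p of (u,w) \<Rightarrow> (u\<in>range Inl \<and> w\<in>range Inl \<and> gedge A C (T0 u) (T0 w)) \<or>
       ((\<forall>i<6. \<kappa> i u \<noteq> \<kappa> i w) \<and>
        (u\<in>range Inl \<longrightarrow> (\<forall>xs\<in>tuples A 3. T0 u xs = s (map (\<lambda>i. xs ! \<kappa> i u) [0..<6]))) \<and>
        (w\<in>range Inl \<longrightarrow> (\<forall>xs\<in>tuples A 3. T0 w xs = s (map (\<lambda>i. xs ! \<kappa> i w) [0..<6]))))"
        using pab by simp
    qed
  qed
  then obtain T where "\<forall>w\<in>?VW. (3, T w)\<in>C" "\<forall>(u,w)\<in>?EW. gedge A C (T u) (T w)" by blast
  then show ?thesis by (rule T_to_sat)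
qed


lemma part3H:
  fixes A :: "'c set" and VG :: "'a set" and VH :: "'b set" and VN :: "'n set"
  assumes G: "finite_loopless_graph VG EG" "\<not> three_colorable VG EG"
    and H: "finite_loopless_graph VH EH"
    and e: "critical_edge VG EG g g'"
    and f: "critical_edge VH EH h h'"
    and N: "finite_loopless_graph VN EN"
    and Ndist: "distinct [x, x', y, y']"
    and N2: "\<forall>c. (\<forall>v\<in>{x, x', y, y'}. c v \<in> K3_V) \<longrightarrow> ((c x \<noteq> c x') \<noteq> (c y \<noteq> c y')) \<longrightarrow>
               (\<exists>c'. hom_K3 VN EN c' \<and> (\<forall>v\<in>{x, x', y, y'}. c' v = c v))"
    and cl: "clone A C" and sat: "h1_sat A C (Sigma_graph VH EH)"
  shows "h1_sat A C (Sigma_graph (glue_V VG VH VN g g' h h' x x' y y') (glue_E EG EH EN g g' h h' x x' y y'))"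
proof -
  let ?VW = "glue_V VG VH VN g g' h h' x x' y y'" and ?EW = "glue_E EG EH EN g g' h h' x x' y y'"
  let ?em = "embN g g' h h' x x' y y'"
  let ?P = "{w. \<exists>b. w = Inr (Inl b)} :: ('a + 'b + 'n) set"
  obtain TH where TH1: "\<forall>w\<in>VH. (3, TH w)\<in>C" and TH2: "\<forall>(u,w)\<in>EH. gedge A C (TH u) (TH w)"
    using sat_to_T[OF sat] by blast
  have hh: "(h,h')\<in>EH" "h \<noteq> h'" "h\<in>VH" "h'\<in>VH"
    using f H unfolding critical_edge_def finite_loopless_graph_def by auto
  obtain s where s: "(6,s)\<in>C" and sh: "\<forall>xs\<in>tuples A 3. TH h xs = s (map (\<lambda>i. xs ! (Pl ! i)) [0..<6])"
    and sh': "\<forall>xs\<in>tuples A 3. TH h' xs = s (map (\<lambda>i. xs ! (Ql ! i)) [0..<6])"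
    using gedge_agree[of A C "TH h" "TH h'"] TH2 hh(1) by blast
  obtain cG where cG: "hom_K3 VG (remove_edge EG g g') cG" "cG g = cG g'" "g\<in>VG" "g'\<in>VG"
    using crit_col[OF G e] by blast
  have cGg: "cG g < 3" using hom_vert[OF cG(1) cG(3)] K3V_lt by blast
  define ci where "ci i v = (if v = y then Pl ! i else if v = y' then Ql ! i else cG g)" for i v
  define cN where "cN i = (SOME c'. hom_K3 VN EN c' \<and> (\<forall>v\<in>{x, x', y, y'}. c' v = ci i v))" for i
  have civ: "ci i x = cG g" "ci i x' = cG g" "ci i y = Pl ! i" "ci i y' = Ql ! i" for i
    using Ndist by (auto simp: ci_def)
  have cN: "hom_K3 VN EN (cN i) \<and> (\<forall>v\<in>{x, x', y, y'}. cN i v = ci i v)" if i: "i < 6" for i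
  proof -
    have "\<forall>v\<in>{x, x', y, y'}. ci i v \<in> K3_V" using civ[of i] PQ[OF i] cGg K3V_lt by auto
    moreover have "(ci i x \<noteq> ci i x') \<noteq> (ci i y \<noteq> ci i y')" using civ[of i] PQ[OF i] by auto
    ultimately have "\<exists>c'. hom_K3 VN EN c' \<and> (\<forall>v\<in>{x, x', y, y'}. c' v = ci i v)"
      using N2 by blast
    then show ?thesis unfolding cN_def by (rule someI_ex)
  qed
  define \<kappa> where "\<kappa> i w = (case w of Inl a \<Rightarrow> (if a\<in>VG then cG a else 0)
      | Inr (Inl b) \<Rightarrow> (if b = h then Pl ! i else if b = h' then Ql ! i else 0)
      | Inr (Inr v) \<Rightarrow> (if v\<in>VN then cN i v else 0))" for i w
  have kr: "\<forall>i<6. \<forall>w. \<kappa> i w < 3"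
  proof (intro allI impI)
    fix i w assume i: "(i::nat) < 6"
    show "\<kappa> i w < 3"
    proof (cases w)
      case (Inl a) then show ?thesis using hom_vert[OF cG(1)] K3V_lt by (simp add: \<kappa>_def)
    next
      case (Inr z) then show ?thesis
        using PQ[OF i] hom_vert[OF conjunct1[OF cN[OF i]]] K3V_lt
        by (cases z) (auto simp: \<kappa>_def)
    qed
  qed
  have kem: "\<kappa> i (?em u) = cN i u" if i: "i < 6" and u: "u \<in> VN" for i u
  proof -
    have c2: "\<forall>v\<in>{x, x', y, y'}. cN i v = ci i v" using cN[OF i] by blast
    consider "u = x" | "u = x'" | "u = y" | "u = y'" | "u \<notin> {x,x',y,y'}" by blast
    then show ?thesis
      by cases (use c2 civ hh(2) cG u in \<open>simp_all add: embN_vals[OF Ndist] \<kappa>_def\<close>)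
  qed
  have kh: "\<forall>i<6. \<kappa> i (Inr (Inl h)) = Pl ! i" "\<forall>i<6. \<kappa> i (Inr (Inl h')) = Ql ! i"
    using hh(2) by (simp_all add: \<kappa>_def)
  define T0 :: "'a + 'b + 'n \<Rightarrow> 'c list \<Rightarrow> 'c" where
    "T0 w = (case w of Inr (Inl b) \<Rightarrow> TH b | _ \<Rightarrow> TH h)" for w
  have ag: "\<forall>xs\<in>tuples A 3. T0 (Inr (Inl h)) xs = s (map (\<lambda>i. xs ! \<kappa> i (Inr (Inl h))) [0..<6])"
    using agree_shift[OF sh kh(1)] by (simp add: T0_def)
  have ag': "\<forall>xs\<in>tuples A 3. T0 (Inr (Inl h')) xs = s (map (\<lambda>i. xs ! \<kappa> i (Inr (Inl h'))) [0..<6])"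
    using agree_shift[OF sh' kh(2)] by (simp add: T0_def)
  have ENV: "EN \<subseteq> VN \<times> VN" using N unfolding finite_loopless_graph_def by blast
  have EGV: "remove_edge EG g g' \<subseteq> VG \<times> VG" using G(1) unfolding finite_loopless_graph_def remove_edge_def by blast
  have "\<exists>T. (\<forall>w\<in>?VW. (3, T w)\<in>C) \<and> (\<forall>(u,w)\<in>?EW. gedge A C (T u) (T w))"
  proof (rule assemble[OF cl s kr, where P = ?P and Tz = T0])
    show "\<forall>w\<in>?VW. w \<in> ?P \<longrightarrow> (3, T0 w) \<in> C"
    proof (intro ballI impI)
      fix w assume w: "w \<in> ?VW" "w \<in> ?P"
      then obtain b where a: "w = Inr (Inl b)" by blast
      from w(1) have "b \<in> VH"
      proof (cases rule: glue_V_cases)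
        case (G u) then show ?thesis using a by simp
      next
        case (H u) then show ?thesis using a by simp
      next
        case (N u) then show ?thesis using a embN_InrInl[of g g' h h' x x' y y' u b] hh by auto
      qed
      then show "(3, T0 w) \<in> C" using TH1 a by (simp add: T0_def)
    qed
  next
    show "\<forall>(u,w)\<in>?EW. (u\<in>?P \<and> w\<in>?P \<and> gedge A C (T0 u) (T0 w)) \<or>
       ((\<forall>i<6. \<kappa> i u \<noteq> \<kappa> i w) \<and>
        (u\<in>?P \<longrightarrow> (\<forall>xs\<in>tuples A 3. T0 u xs = s (map (\<lambda>i. xs ! \<kappa> i u) [0..<6]))) \<and>
        (w\<in>?P \<longrightarrow> (\<forall>xs\<in>tuples A 3. T0 w xs = s (map (\<lambda>i. xs ! \<kappa> i w) [0..<6]))))"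
    proof (rule ballI)
      fix p assume p: "p \<in> ?EW"
      obtain a b where pab: "p = (a,b)" by (cases p)
      with p have ab: "(a,b) \<in> ?EW" by simp
      have agN: "\<forall>xs\<in>tuples A 3. T0 (?em u) xs = s (map (\<lambda>i. xs ! \<kappa> i (?em u)) [0..<6])"
        if "?em u \<in> ?P" for u
      proof -
        from that obtain c where "?em u = Inr (Inl c)" by blast
        from embN_InrInl[OF this] have "?em u = Inr (Inl h) \<or> ?em u = Inr (Inl h')"
          by (auto simp: embN_vals[OF Ndist])
        then show ?thesis using ag ag' by auto
      qed
      from ab have "(a\<in>?P \<and> b\<in>?P \<and> gedge A C (T0 a) (T0 b)) \<or>
       ((\<forall>i<6. \<kappa> i a \<noteq> \<kappa> i b) \<and>
        (a\<in>?P \<longrightarrow> (\<forall>xs\<in>tuples A 3. T0 a xs = s (map (\<lambda>i. xs ! \<kappa> i a) [0..<6]))) \<and>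
        (b\<in>?P \<longrightarrow> (\<forall>xs\<in>tuples A 3. T0 b xs = s (map (\<lambda>i. xs ! \<kappa> i b) [0..<6]))))"
      proof (cases rule: glue_E_cases)
        case (H u w)
        then have "(u,w)\<in>EH" unfolding remove_edge_def by blast
        then have "gedge A C (TH u) (TH w)" using TH2 by blast
        then show ?thesis using H by (simp add: T0_def)
      next
        case (G u w)
        then have uw: "u\<in>VG" "w\<in>VG" using EGV by blast+
        have "(cG u, cG w) \<in> K3_E" using hom_edge[OF cG(1) G(3)] .
        then have "cG u \<noteq> cG w" by (simp add: K3E)
        then show ?thesis using G uw by (auto simp: \<kappa>_def)
      next
        case (N u w)
        then have uw: "u\<in>VN" "w\<in>VN" using ENV by blast+
        have "\<forall>i<6. \<kappa> i a \<noteq> \<kappa> i b"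
        proof (intro allI impI)
          fix i assume i: "(i::nat) < 6"
          have "(cN i u, cN i w) \<in> K3_E" using hom_edge[OF conjunct1[OF cN[OF i]] N(3)] .
          then show "\<kappa> i a \<noteq> \<kappa> i b" using N kem[OF i uw(1)] kem[OF i uw(2)] by (simp add: K3E)
        qed
        moreover have "a\<in>?P \<longrightarrow> (\<forall>xs\<in>tuples A 3. T0 a xs = s (map (\<lambda>i. xs ! \<kappa> i a) [0..<6]))"
          using agN[of u] N(1) by simp
        moreover have "b\<in>?P \<longrightarrow> (\<forall>xs\<in>tuples A 3. T0 b xs = s (map (\<lambda>i. xs ! \<kappa> i b) [0..<6]))"
          using agN[of w] N(2) by simp
        ultimately show ?thesis by blast
      qed
      then show "case p of (u,w) \<Rightarrow> (u\<in>?P \<and> w\<in>?P \<and> gedge A C (T0 u) (T0 w)) \<or>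
       ((\<forall>i<6. \<kappa> i u \<noteq> \<kappa> i w) \<and>
        (u\<in>?P \<longrightarrow> (\<forall>xs\<in>tuples A 3. T0 u xs = s (map (\<lambda>i. xs ! \<kappa> i u) [0..<6]))) \<and>
        (w\<in>?P \<longrightarrow> (\<forall>xs\<in>tuples A 3. T0 w xs = s (map (\<lambda>i. xs ! \<kappa> i w) [0..<6]))))"
        using pab by simp
    qed
  qed
  then obtain T where "\<forall>w\<in>?VW. (3, T w)\<in>C" "\<forall>(u,w)\<in>?EW. gedge A C (T u) (T w)" by blast
  then show ?thesis by (rule T_to_sat)
qed


theorem lemmaA1:
  fixes VG :: "'a set" and EG :: "('a \<times> 'a) set" and g g' :: 'a
    and VH :: "'b set" and EH :: "('b \<times> 'b) set" and h h' :: 'b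
    and VN :: "'n set" and EN :: "('n \<times> 'n) set" and x x' y y' d1 d2 :: 'n
  assumes G: "finite_loopless_graph VG EG" "\<not> three_colorable VG EG"
    and H: "finite_loopless_graph VH EH" "\<not> three_colorable VH EH"
    and e: "critical_edge VG EG g g'"
    and f: "critical_edge VH EH h h'"
    and N: "finite_loopless_graph VN EN"
    and Nverts: "x \<in> VN" "x' \<in> VN" "y \<in> VN" "y' \<in> VN"
    and Ndist: "distinct [x, x', y, y']"
    and Nnon: "(x, x') \<notin> EN" "(y, y') \<notin> EN"
    and d: "(d1, d2) \<in> EN"
    and N1: "\<forall>c. hom_K3 VN EN c \<longrightarrow> ((c x \<noteq> c x') \<noteq> (c y \<noteq> c y'))"
    and N2: "\<forall>c. (\<forall>v\<in>{x, x', y, y'}. c v \<in> K3_V) \<longrightarrow> ((c x \<noteq> c x') \<noteq> (c y \<noteq> c y')) \<longrightarrow>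
               (\<exists>c'. hom_K3 VN EN c' \<and> (\<forall>v\<in>{x, x', y, y'}. c' v = c v))"
    and N3: "\<forall>c. (\<forall>v\<in>{x, x', y, y'}. c v \<in> K3_V) \<longrightarrow> c x = c x' \<longrightarrow> c y = c y' \<longrightarrow>
               (\<exists>c'. hom_K3 VN (remove_edge EN d1 d2) c' \<and> (\<forall>v\<in>{x, x', y, y'}. c' v = c v))"
  defines "VW \<equiv> glue_V VG VH VN g g' h h' x x' y y'"
    and "EW \<equiv> glue_E EG EH EN g g' h h' x x' y y'"
  shows "\<not> three_colorable VW EW \<and>
         critical_edge VW EW (embN g g' h h' x x' y y' d1) (embN g g' h h' x x' y y' d2) \<and>
         h1_implies TYPE('c) (Sigma_graph VG EG) (Sigma_graph VW EW) \<and>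
         h1_implies TYPE('c) (Sigma_graph VH EH) (Sigma_graph VW EW)"
proof -
  have EG: "EG \<subseteq> VG \<times> VG" and EH: "EH \<subseteq> VH \<times> VH" using G(1) H(1) unfolding finite_loopless_graph_def by auto
  have p1: "\<not> three_colorable VW EW"
    unfolding VW_def EW_def by (rule part1[OF G H e f Nverts Ndist N1])
  have p2: "critical_edge VW EW (embN g g' h h' x x' y y' d1) (embN g g' h h' x x' y y' d2)"
    unfolding VW_def EW_def by (rule part2[OF G H e f N Ndist d N3])
  have p3: "h1_implies TYPE('c) (Sigma_graph VG EG) (Sigma_graph VW EW)"
    unfolding h1_implies_def VW_def EW_def using part3G[OF G(1) H e f N Ndist N2] by blast
  have p4: "h1_implies TYPE('c) (Sigma_graph VH EH) (Sigma_graph VW EW)"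
    unfolding h1_implies_def VW_def EW_def using part3H[OF G H(1) e f N Ndist N2] by blast
  show ?thesis using p1 p2 p3 p4 by blast
qed

end
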